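(* Let $(A,\mathfrak m,k)$ be a commutative Noetherian local ring and let $C$ be a totally acyclic complex of finitely generated free $A$-modules. Then $C$ is contractible at $n$ for some $n\in\mathbb Z$ if and only if $C$ is contractible.
   Context: A complex $C$ of finitely generated free $A$-modules is totally acyclic if $H(C)=0$ and $H(\operatorname{Hom}_A(C,A))=0$. $C$ is contractible at $n$ if there exist $A$-linear maps $s_n:C_n\to C_{n+1}$ and $s_{n-1}:C_{n-1}\to C_n$ such that $\partial^C_{n+1}s_n+s_{n-1}\partial^C_n:C_n\to C_n$ is an isomorphism. $C$ is contractible if there exist maps $s_n:C_n\to C_{n+1}$ for all $n$ such that $s_n,s_{n-1}$ give contractibility at $n$ for every $n$ (equivalently, the identity of $C$ is null-homotopic). *)

theory Defs
  imports "Jordan_Normal_Form.Matrix"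
begin

definition cr_ideal :: "'a::comm_ring_1 set \<Rightarrow> bool" where
  "cr_ideal I \<longleftrightarrow> 0 \<in> I \<and> (\<forall>x\<in>I. \<forall>y\<in>I. x + y \<in> I) \<and> (\<forall>a x. x \<in> I \<longrightarrow> a * x \<in> I)"

definition fg_ideal :: "'a::comm_ring_1 set \<Rightarrow> bool" where
  "fg_ideal I \<longleftrightarrow> (\<exists>S. finite S \<and> I = {x. \<exists>c. x = (\<Sum>s\<in>S. c s * s)})"

definition noetherian_ring :: "'a::comm_ring_1 itself \<Rightarrow> bool" where
  "noetherian_ring _ \<longleftrightarrow> (\<forall>I::'a set. cr_ideal I \<longrightarrow> fg_ideal I)"

definition maximal_ideal :: "'a::comm_ring_1 set \<Rightarrow> bool" where
  "maximal_ideal m \<longleftrightarrow> cr_ideal m \<and> m \<noteq> UNIV \<and>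
     (\<forall>J. cr_ideal J \<and> m \<subseteq> J \<longrightarrow> J = m \<or> J = UNIV)"

definition local_ring :: "'a::comm_ring_1 itself \<Rightarrow> bool" where
  "local_ring _ \<longleftrightarrow> (\<exists>!m::'a set. maximal_ideal m)"

text \<open>A complex of finitely generated free A-modules: C_n = A^(r n), the differential
  d n : C_n \<rightarrow> C_(n-1) is an (r (n-1)) x (r n) matrix acting on column vectors.
  Every A-linear map A^p \<rightarrow> A^q is given by such a matrix.\<close>

definition is_complex :: "(int \<Rightarrow> nat) \<Rightarrow> (int \<Rightarrow> 'a::comm_ring_1 mat) \<Rightarrow> bool" where
  "is_complex r d \<longleftrightarrow> (\<forall>n. d n \<in> carrier_mat (r (n - 1)) (r n)) \<and>
     (\<forall>n. d (n - 1) * d n = 0\<^sub>m (r (n - 2)) (r n))"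

definition exact_complex :: "(int \<Rightarrow> nat) \<Rightarrow> (int \<Rightarrow> 'a::comm_ring_1 mat) \<Rightarrow> bool" where
  "exact_complex r d \<longleftrightarrow> (\<forall>n. \<forall>v \<in> carrier_vec (r n).
      d n *\<^sub>v v = 0\<^sub>v (r (n - 1)) \<longrightarrow> (\<exists>w \<in> carrier_vec (r (n + 1)). v = d (n + 1) *\<^sub>v w))"

text \<open>Hom_A(C,A): its degree (-n) term is Hom_A(C_n,A) = A^(r n) (dual basis), with differential
  Hom(C_n,A) \<rightarrow> Hom(C_(n+1),A) given by the transpose of d (n+1). Reindexed with m = -n
  it is again a complex with differential of degree -1.\<close>
definition dual_ranks :: "(int \<Rightarrow> nat) \<Rightarrow> int \<Rightarrow> nat" where
  "dual_ranks r m = r (- m)"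

definition dual_diff :: "(int \<Rightarrow> 'a mat) \<Rightarrow> int \<Rightarrow> 'a mat" where
  "dual_diff d m = transpose_mat (d (- m + 1))"

definition totally_acyclic :: "(int \<Rightarrow> nat) \<Rightarrow> (int \<Rightarrow> 'a::comm_ring_1 mat) \<Rightarrow> bool" where
  "totally_acyclic r d \<longleftrightarrow> exact_complex r d \<and> exact_complex (dual_ranks r) (dual_diff d)"

definition contractible_at :: "(int \<Rightarrow> nat) \<Rightarrow> (int \<Rightarrow> 'a::comm_ring_1 mat) \<Rightarrow> int \<Rightarrow> bool" where
  "contractible_at r d n \<longleftrightarrow> (\<exists>s1 s0. s1 \<in> carrier_mat (r (n + 1)) (r n) \<and>
      s0 \<in> carrier_mat (r n) (r (n - 1)) \<and> invertible_mat (d (n + 1) * s1 + s0 * d n))"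

definition contractible :: "(int \<Rightarrow> nat) \<Rightarrow> (int \<Rightarrow> 'a::comm_ring_1 mat) \<Rightarrow> bool" where
  "contractible r d \<longleftrightarrow> (\<exists>s. (\<forall>n. s n \<in> carrier_mat (r (n + 1)) (r n)) \<and>
      (\<forall>n. invertible_mat (d (n + 1) * s n + s (n - 1) * d n)))"

end

theory Submission
  imports Defs "Jordan_Normal_Form.Char_Poly"
begin

fun msum :: "(nat \<Rightarrow> 'a::comm_ring_1) \<Rightarrow> 'a mat \<Rightarrow> nat \<Rightarrow> 'a mat" where
  "msum c A 0 = 0\<^sub>m (dim_row A) (dim_row A)"
| "msum c A (Suc k) = msum c A k + c k \<cdot>\<^sub>m (A ^\<^sub>m k)"

lemma msum_carrier: "A \<in> carrier_mat n n \<Longrightarrow> msum c A k \<in> carrier_mat n n"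
  by (induct k) auto

lemma ch_entry:
  fixes A :: "'a::comm_ring_1 mat"
  assumes A: "A \<in> carrier_mat n n"
  defines "M \<equiv> char_poly_matrix A"
  defines "B \<equiv> adj_mat M"
  assumes ij: "i < n" "j < n"
  shows "(if i = j then coeff (char_poly A) k else 0) =
     (if k = 0 then 0 else coeff (B $$ (i,j)) (k - 1)) - (\<Sum>l<n. A $$ (i,l) * coeff (B $$ (l,j)) k)"
proof -
  have M: "M \<in> carrier_mat n n" using A unfolding M_def by simp
  have MB: "M * B = det M \<cdot>\<^sub>m 1\<^sub>m n" using adj_mat[OF M] unfolding B_def by simp
  have Bc: "B \<in> carrier_mat n n" using adj_mat[OF M] unfolding B_def by simp
  have "(M * B) $$ (i,j) = (\<Sum>l<n. M $$ (i,l) * B $$ (l,j))"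
    using M Bc ij by (simp add: scalar_prod_def lessThan_atLeast0)
  also have "\<dots> = (\<Sum>l<n. ((if i = l then [:0,1:] else 0) + [: - A $$ (i,l) :]) * B $$ (l,j))"
    using A ij unfolding M_def char_poly_matrix_def by (intro sum.cong) auto
  also have "\<dots> = (\<Sum>l<n. (if i = l then [:0,1:] * B $$ (l,j) else 0) + [: - A $$ (i,l) :] * B $$ (l,j))"
    by (intro sum.cong) (auto simp del: pCons_0_hom.hom_zero  simp: distrib_right)
  also have "\<dots> = [:0,1:] * B $$ (i,j) + (\<Sum>l<n. [: - A $$ (i,l) :] * B $$ (l,j))"
    using ij by (simp only: sum.distrib sum.delta' lessThan_iff) simp
  finally have e: "(M * B) $$ (i,j) = [:0,1:] * B $$ (i,j) + (\<Sum>l<n. [: - A $$ (i,l) :] * B $$ (l,j))" .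
  have "(M * B) $$ (i,j) = (if i = j then char_poly A else 0)"
    using MB ij unfolding char_poly_def M_def by simp
  hence "(if i = j then char_poly A else 0) = [:0,1:] * B $$ (i,j) + (\<Sum>l<n. [: - A $$ (i,l) :] * B $$ (l,j))"
    using e by simp
  hence "coeff (if i = j then char_poly A else 0) k = coeff ([:0,1:] * B $$ (i,j) + (\<Sum>l<n. [: - A $$ (i,l) :] * B $$ (l,j))) k"
    by simp
  also have "\<dots> = (if k = 0 then 0 else coeff (B $$ (i,j)) (k - 1)) - (\<Sum>l<n. A $$ (i,l) * coeff (B $$ (l,j)) k)"
    by (cases k) (simp_all add: coeff_sum sum_negf)
  finally show ?thesis by (simp split: if_splits)
qed

lemma ch_zero:
  fixes A :: "'a::comm_ring_1 mat"
  assumes A: "A \<in> carrier_mat n n"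
  shows "\<exists>c N. c 0 = det (- A) \<and> msum c A (Suc N) = 0\<^sub>m n n"
proof -
  define M where "M = char_poly_matrix A"
  define B where "B = adj_mat M"
  define c where "c k = coeff (char_poly A) k" for k
  define Bk where "Bk k = mat n n (\<lambda>(i,j). coeff (B $$ (i,j)) k)" for k
  define D where "D k = mat n n (\<lambda>(i,j). if k = 0 then 0 else coeff (B $$ (i,j)) (k - 1))" for k
  have Bkc: "Bk k \<in> carrier_mat n n" for k unfolding Bk_def by simp
  have Dc: "D k \<in> carrier_mat n n" for k unfolding D_def by simp
  have key: "c k \<cdot>\<^sub>m 1\<^sub>m n = D k - A * Bk k" for k
  proof (rule eq_matI)
    fix i j assume ij: "i < dim_row (D k - A * Bk k)" "j < dim_col (D k - A * Bk k)"
    hence ij': "i < n" "j < n" using Dc A Bkc[of k] by auto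
    have "(A * Bk k) $$ (i,j) = (\<Sum>l<n. A $$ (i,l) * coeff (B $$ (l,j)) k)"
      using A ij' unfolding Bk_def by (simp add: scalar_prod_def lessThan_atLeast0)
    moreover have "(D k - A * Bk k) $$ (i,j) = D k $$ (i,j) - (A * Bk k) $$ (i,j)"
      using A Bkc[of k] Dc[of k] ij' by simp
    moreover have "(c k \<cdot>\<^sub>m 1\<^sub>m n) $$ (i,j) = (if i = j then coeff (char_poly A) k else 0)"
      using ij' by (simp add: c_def)
    moreover have "D k $$ (i,j) = (if k = 0 then 0 else coeff (B $$ (i,j)) (k - 1))"
      using ij' by (simp add: D_def)
    ultimately show "(c k \<cdot>\<^sub>m 1\<^sub>m n) $$ (i, j) = (D k - A * Bk k) $$ (i, j)"
      using ch_entry[OF A ij', of k] unfolding M_def[symmetric] B_def[symmetric]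
      by (simp only:)
  qed (use Dc A Bkc[of k] in auto)
  have tele: "msum c A N = - (A ^\<^sub>m N * D N)" for N
  proof (induct N)
    case 0
    show ?case using A Dc by (intro eq_matI) (auto simp: D_def)
  next
    case (Suc N)
    have "c N \<cdot>\<^sub>m (A ^\<^sub>m N) = A ^\<^sub>m N * (c N \<cdot>\<^sub>m 1\<^sub>m n)"
      using A by (simp add: mult_smult_distrib[of _ n n _ n])
    also have "\<dots> = A ^\<^sub>m N * D N - A ^\<^sub>m N * (A * Bk N)"
      unfolding key using A Dc Bkc by (simp add: mult_minus_distrib_mat[of _ n n _ n])
    also have "A ^\<^sub>m N * (A * Bk N) = A ^\<^sub>m Suc N * D (Suc N)"
      using A Bkc by (simp add: D_def Bk_def[symmetric] assoc_mult_mat[of _ n n _ n _ n])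
    finally have e: "c N \<cdot>\<^sub>m (A ^\<^sub>m N) = A ^\<^sub>m N * D N - A ^\<^sub>m Suc N * D (Suc N)" .
    have X: "A ^\<^sub>m N * D N \<in> carrier_mat n n" "A ^\<^sub>m Suc N * D (Suc N) \<in> carrier_mat n n"
      using A Dc by (auto intro!: mult_carrier_mat[of _ n n _ n])
    show ?case using Suc X A Dc[of N] Dc[of "Suc N"] by (simp add: e) (intro eq_matI, auto)
  qed
  define K where "K = Suc (\<Sum>i<n. \<Sum>j<n. degree (B $$ (i,j)))"
  have "D (Suc K) = 0\<^sub>m n n"
  proof (rule eq_matI)
    fix i j assume "i < dim_row (0\<^sub>m n n :: 'a mat)" "j < dim_col (0\<^sub>m n n :: 'a mat)"
    hence ij: "i < n" "j < n" by auto
    have "degree (B $$ (i,j)) \<le> (\<Sum>j<n. degree (B $$ (i,j)))"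
      using ij by (intro member_le_sum) auto
    also have "\<dots> \<le> (\<Sum>i<n. \<Sum>j<n. degree (B $$ (i,j)))"
      using ij by (intro member_le_sum[where f = "\<lambda>i. \<Sum>j<n. degree (B $$ (i,j))"]) auto
    finally have "degree (B $$ (i,j)) < K" unfolding K_def by simp
    thus "D (Suc K) $$ (i, j) = 0\<^sub>m n n $$ (i, j)" using ij unfolding D_def
      by (simp add: coeff_eq_0)
  qed (auto simp: D_def)
  hence "msum c A (Suc K) = 0\<^sub>m n n" using tele[of "Suc K"] A
    by (intro eq_matI) auto
  moreover have "c 0 = det (- A)"
  proof -
    have "c 0 = poly (det M) 0" unfolding c_def char_poly_def M_def by (simp add: poly_0_coeff_0)
    also have "\<dots> = det (- A)"
      by (rule poly_det_cong[of _ n]) (use A in \<open>auto simp: M_def char_poly_matrix_def\<close>)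
    finally show ?thesis .
  qed
  ultimately show ?thesis by blast
qed

lemma start_reg:
  fixes P :: "'a::comm_ring_1 mat"
  assumes P: "P \<in> carrier_mat a b" and Q: "Q \<in> carrier_mat b c" and PQ: "P * Q = 0\<^sub>m a c"
    and S1: "S1 \<in> carrier_mat c b" and S0: "S0 \<in> carrier_mat b a"
    and inv: "invertible_mat (Q * S1 + S0 * P)"
  shows "\<exists>T \<in> carrier_mat c b. Q * T * Q = Q"
proof -
  define h where "h = Q * S1 + S0 * P"
  have h: "h \<in> carrier_mat b b" unfolding h_def using P Q S1 S0 by auto
  from inv obtain g where hg: "h * g = 1\<^sub>m b" and gh0: "g * h = 1\<^sub>m (dim_row g)"
    unfolding invertible_mat_def inverts_mat_def h_def[symmetric] using h by auto
  have g: "g \<in> carrier_mat b b"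
  proof -
    have "dim_col g = b" using hg h by (metis index_mult_mat(3) index_one_mat(3))
    moreover have "dim_row g = b" using gh0 h by (metis index_mult_mat(3) index_one_mat(3) carrier_matD(2))
    ultimately show ?thesis by auto
  qed
  have gh: "g * h = 1\<^sub>m b" using gh0 g by simp
  have hQ: "h * Q = Q * (S1 * Q)"
  proof -
    have "h * Q = Q * S1 * Q + S0 * P * Q" unfolding h_def using P Q S1 S0
      by (simp add: add_mult_distrib_mat[of _ b b _ _ c])
    also have "S0 * P * Q = 0\<^sub>m b c" using P Q S0 PQ by (simp add: assoc_mult_mat[of _ b a _ b _ c])
    also have "Q * S1 * Q + 0\<^sub>m b c = Q * (S1 * Q)" using Q S1 by (simp add: assoc_mult_mat[of _ b c _ b _ c])
    finally show ?thesis .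
  qed
  have powQ: "h ^\<^sub>m k * Q = Q * (S1 * Q) ^\<^sub>m k" for k
  proof (induct k)
    case 0 show ?case using h Q S1 by simp
  next
    case (Suc k)
    have "h ^\<^sub>m Suc k * Q = h ^\<^sub>m k * (h * Q)" using h Q by (simp add: assoc_mult_mat[of _ b b _ b _ c])
    also have "\<dots> = (h ^\<^sub>m k * Q) * (S1 * Q)" unfolding hQ using h Q S1
      by (simp add: assoc_mult_mat[of _ b b _ c _ c])
    also have "\<dots> = Q * (S1 * Q) ^\<^sub>m Suc k" unfolding Suc using Q S1
      by (simp add: assoc_mult_mat[of _ b c _ c _ c])
    finally show ?case .
  qed
  have PhQ: "P * (h ^\<^sub>m k * Q) = 0\<^sub>m a c" for k
  proof -
    have SQ: "(S1 * Q) ^\<^sub>m k \<in> carrier_mat c c" using S1 Q by auto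
    show ?thesis unfolding powQ using P Q SQ PQ by (simp add: assoc_mult_mat[of _ a b _ c _ c, symmetric] left_mult_zero_mat[OF SQ])
  qed
  obtain cc N where c0: "cc 0 = det (- h)" and z: "msum cc h (Suc N) = 0\<^sub>m b b"
    using ch_zero[OF h] by blast
  have ind: "P * (msum cc h (Suc k) * (g * Q)) = cc 0 \<cdot>\<^sub>m (P * (g * Q))" for k
  proof (induct k)
    case 0
    have gQ: "g * Q \<in> carrier_mat b c" using g Q by auto
    have m1: "msum cc h (Suc 0) = cc 0 \<cdot>\<^sub>m 1\<^sub>m b" using h by (intro eq_matI) auto
    show ?case unfolding m1 using P gQ by (simp add: left_mult_one_mat[OF gQ] mult_smult_assoc_mat[of _ b b _ c] mult_smult_distrib[of _ a b _ c])
  next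
    case (Suc k)
    have gQ: "g * Q \<in> carrier_mat b c" using g Q by auto
    have M: "msum cc h (Suc k) \<in> carrier_mat b b" using msum_carrier[OF h] .
    have hp: "h ^\<^sub>m Suc k \<in> carrier_mat b b" using h by auto
    have "h ^\<^sub>m Suc k * (g * Q) = h ^\<^sub>m k * Q"
    proof -
      have "h ^\<^sub>m Suc k * (g * Q) = h ^\<^sub>m k * ((h * g) * Q)" using h g Q
        by (simp add: assoc_mult_mat[of _ b b _ b _ c] assoc_mult_mat[of _ b b _ b _ b])
      thus ?thesis using hg h Q by simp
    qed
    hence "P * ((cc (Suc k) \<cdot>\<^sub>m h ^\<^sub>m Suc k) * (g * Q)) = 0\<^sub>m a c"
      using PhQ[of k] P gQ hp mult_carrier_mat[OF pow_carrier_mat[OF h, of k] Q] by (simp add: mult_smult_assoc_mat[of _ b b _ c] mult_smult_distrib[of _ a b _ c])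
    moreover have "P * (msum cc h (Suc (Suc k)) * (g * Q)) =
       P * (msum cc h (Suc k) * (g * Q)) + P * ((cc (Suc k) \<cdot>\<^sub>m h ^\<^sub>m Suc k) * (g * Q))"
    proof -
      have sm: "cc (Suc k) \<cdot>\<^sub>m h ^\<^sub>m Suc k \<in> carrier_mat b b" using hp by simp
      have "msum cc h (Suc (Suc k)) = msum cc h (Suc k) + cc (Suc k) \<cdot>\<^sub>m h ^\<^sub>m Suc k"
        by (simp only: msum.simps(2))
      hence "P * (msum cc h (Suc (Suc k)) * (g * Q)) = P * (msum cc h (Suc k) * (g * Q) + (cc (Suc k) \<cdot>\<^sub>m h ^\<^sub>m Suc k) * (g * Q))"
        using add_mult_distrib_mat[OF M sm gQ] by simp
      also have "\<dots> = P * (msum cc h (Suc k) * (g * Q)) + P * ((cc (Suc k) \<cdot>\<^sub>m h ^\<^sub>m Suc k) * (g * Q))"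
        by (rule mult_add_distrib_mat[OF P mult_carrier_mat[OF M gQ] mult_carrier_mat[OF sm gQ]])
      finally show ?thesis .
    qed
    ultimately show ?case using Suc P gQ by simp
  qed
  have X: "P * (g * Q) \<in> carrier_mat a c" using P g Q by auto
  have c0z: "cc 0 \<cdot>\<^sub>m (P * (g * Q)) = 0\<^sub>m a c"
    using ind[of N] z P g Q by simp
  have unit: "det (- g) * cc 0 = 1"
  proof -
    have "det (- g) * det (- h) = det ((- g) * (- h))" by (rule det_mult[symmetric]) (use g h in auto)
    also have "(- g) * (- h) = 1\<^sub>m b" using gh g h by simp
    finally show ?thesis using c0 by simp
  qed
  have PgQ: "P * (g * Q) = 0\<^sub>m a c"
  proof -
    have "P * (g * Q) = (det (- g) * cc 0) \<cdot>\<^sub>m (P * (g * Q))" by (rule eq_matI) (use unit X in auto)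
    also have "\<dots> = det (- g) \<cdot>\<^sub>m (cc 0 \<cdot>\<^sub>m (P * (g * Q)))" by (rule eq_matI) (auto simp: mult.assoc)
    also have "\<dots> = 0\<^sub>m a c" unfolding c0z by (rule eq_matI) auto
    finally show ?thesis .
  qed
  have "Q = (h * g) * Q" using hg Q by simp
  also have "\<dots> = h * (g * Q)" using h g Q by (simp add: assoc_mult_mat[of _ b b _ b _ c])
  also have "\<dots> = Q * (S1 * (g * Q)) + S0 * (P * (g * Q))"
    unfolding h_def using P Q S1 S0 g
    by (simp add: add_mult_distrib_mat[of _ b b _ _ c] assoc_mult_mat[of _ b c _ b _ c] assoc_mult_mat[of _ b a _ b _ c])
  also have "\<dots> = Q * (S1 * g) * Q" unfolding PgQ using Q S1 g S0
    by (simp add: assoc_mult_mat[of _ b c _ b _ c] assoc_mult_mat[of _ c b _ b _ c])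
  finally have "Q * (S1 * g) * Q = Q" by simp
  moreover have "S1 * g \<in> carrier_mat c b" using S1 g by auto
  ultimately show ?thesis by blast
qed

lemma prop_up_mat:
  fixes D :: "'a::comm_ring_1 mat"
  assumes D: "D \<in> carrier_mat a b" and E: "E \<in> carrier_mat b c" and DE: "D * E = 0\<^sub>m a c"
    and ex: "\<And>v. v \<in> carrier_vec b \<Longrightarrow> D *\<^sub>v v = 0\<^sub>v a \<Longrightarrow> \<exists>w \<in> carrier_vec c. v = E *\<^sub>v w"
    and T: "T \<in> carrier_mat b a" and DTD: "D * T * D = D"
  shows "\<exists>U \<in> carrier_mat c b. E * U * E = E"
proof -
  define R where "R = 1\<^sub>m b - T * D"
  have R: "R \<in> carrier_mat b b" unfolding R_def using T D by auto
  have DR: "D * R = 0\<^sub>m a b"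
  proof -
    have "D * R = D * 1\<^sub>m b - D * (T * D)" unfolding R_def
      by (rule mult_minus_distrib_mat[of _ a b]) (use D T in auto)
    also have "D * (T * D) = D" by (subst assoc_mult_mat[OF D T D, symmetric]) (rule DTD)
    finally show ?thesis using D by (intro eq_matI) auto
  qed
  have "\<forall>j \<in> {..<b}. \<exists>w. w \<in> carrier_vec c \<and> col R j = E *\<^sub>v w"
  proof
    fix j assume "j \<in> {..<b}"
    hence j: "j < b" by simp
    have cv: "col R j \<in> carrier_vec b" using R j by auto
    have "D *\<^sub>v col R j = col (D * R) j" using col_mult2[OF D R j] by simp
    also have "\<dots> = 0\<^sub>v a" unfolding DR using j by auto
    finally show "\<exists>w. w \<in> carrier_vec c \<and> col R j = E *\<^sub>v w" using ex[OF cv] by blast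
  qed
  from bchoice[OF this] obtain W where W0: "\<forall>j \<in> {..<b}. W j \<in> carrier_vec c \<and> col R j = E *\<^sub>v W j"
    by blast
  have W: "\<And>j. j < b \<Longrightarrow> W j \<in> carrier_vec c \<and> col R j = E *\<^sub>v W j" using W0 by simp
  define U where "U = mat c b (\<lambda>(i,j). W j $ i)"
  have U: "U \<in> carrier_mat c b" unfolding U_def by simp
  have EU: "E * U = R"
  proof (rule mat_col_eqI)
    fix j assume "j < dim_col R"
    hence j: "j < b" using R by auto
    have "col U j = W j" unfolding U_def using W[OF j] j by (intro eq_vecI) auto
    hence "col (E * U) j = E *\<^sub>v W j" using col_mult2[OF E U j] by simp
    thus "col (E * U) j = col R j" using W[OF j] by simp
  qed (use E U R in auto)
  have "E * U * E = R * E" unfolding EU ..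
  also have "\<dots> = 1\<^sub>m b * E - T * D * E" unfolding R_def
    by (rule minus_mult_distrib_mat) (use T D E in auto)
  also have "T * D * E = T * (D * E)" using T D E by simp
  also have "\<dots> = 0\<^sub>m b c" unfolding DE using T by simp
  finally have "E * U * E = E" using E by (intro eq_matI) auto
  thus ?thesis using U by blast
qed

lemma reg_transpose:
  fixes D :: "'a::comm_ring_1 mat"
  assumes D: "D \<in> carrier_mat a b" and T: "T \<in> carrier_mat b a" and DTD: "D * T * D = D"
  shows "transpose_mat D * transpose_mat T * transpose_mat D = transpose_mat D"
proof -
  have DT: "D * T \<in> carrier_mat a a" using D T by simp
  have "transpose_mat (D * T * D) = transpose_mat D * transpose_mat (D * T)"
    by (rule transpose_mult[OF DT D])
  also have "transpose_mat (D * T) = transpose_mat T * transpose_mat D"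
    by (rule transpose_mult[OF D T])
  finally have "transpose_mat D * transpose_mat T * transpose_mat D = transpose_mat (D * T * D)"
    using D T by simp
  thus ?thesis using DTD by simp
qed

lemma inv_from_idem:
  fixes p :: "'a::comm_ring_1 mat"
  assumes p: "p \<in> carrier_mat m m" and q: "q \<in> carrier_mat m m"
    and pp: "p * p = p" and qq: "q * q = q" and qp: "q * p = 0\<^sub>m m m"
    and key: "p * (1\<^sub>m m - q) = 1\<^sub>m m - q"
  shows "invertible_mat (p + q)"
proof -
  define h where "h = p + q"
  have h: "h \<in> carrier_mat m m" unfolding h_def using p q by simp
  have pq: "p * q \<in> carrier_mat m m" using p q by simp
  have hp: "h * p = p" unfolding h_def using p q pp qp
    by (simp add: add_mult_distrib_mat[of _ m m _ _ m])
  have qh: "q * h = q" unfolding h_def using p q qq qp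
    by (simp add: mult_add_distrib_mat[of _ m m _ m])
  have k1: "p - p * q = 1\<^sub>m m - q"
    using key by (simp add: mult_minus_distrib_mat[of _ m m _ m] p q right_mult_one_mat[OF p])
  have hpq: "h - p * q = 1\<^sub>m m"
  proof (rule eq_matI)
    fix i j assume ij: "i < dim_row (1\<^sub>m m :: 'a mat)" "j < dim_col (1\<^sub>m m :: 'a mat)"
    have "(p - p * q) $$ (i,j) = (1\<^sub>m m - q) $$ (i,j)" using k1 by simp
    thus "(h - p * q) $$ (i, j) = 1\<^sub>m m $$ (i, j)" using ij p q pq unfolding h_def by (auto simp: algebra_simps)
  qed (use h pq in auto)
  have r: "h * (1\<^sub>m m - p * q) = 1\<^sub>m m"
  proof -
    have "h * (1\<^sub>m m - p * q) = h * 1\<^sub>m m - h * (p * q)"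
      by (rule mult_minus_distrib_mat[of _ m m]) (use h pq in auto)
    also have "h * (p * q) = p * q" by (subst assoc_mult_mat[OF h p q, symmetric]) (simp add: hp)
    finally show ?thesis using hpq h by simp
  qed
  have l: "(1\<^sub>m m - p * q) * h = 1\<^sub>m m"
  proof -
    have "(1\<^sub>m m - p * q) * h = 1\<^sub>m m * h - p * q * h"
      by (rule minus_mult_distrib_mat) (use h pq in auto)
    also have "p * q * h = p * q" using h p q qh by simp
    finally show ?thesis using hpq h by simp
  qed
  show ?thesis unfolding invertible_mat_def inverts_mat_def h_def[symmetric]
  proof (intro conjI exI)
    show "square_mat h" using h by simp
    show "h * (1\<^sub>m m - p * q) = 1\<^sub>m (dim_row h)" using r h by simp
    show "(1\<^sub>m m - p * q) * h = 1\<^sub>m (dim_row (1\<^sub>m m - p * q))" using l p by simp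
  qed
qed


definition regd :: "(int \<Rightarrow> nat) \<Rightarrow> (int \<Rightarrow> 'a::comm_ring_1 mat) \<Rightarrow> int \<Rightarrow> bool" where
  "regd r d m \<longleftrightarrow> (\<exists>t \<in> carrier_mat (r m) (r (m - 1)). d m * t * d m = d m)"

lemma cx_carrier: "is_complex r d \<Longrightarrow> d n \<in> carrier_mat (r (n - 1)) (r n)"
  unfolding is_complex_def by blast

lemma cx_zero: "is_complex r d \<Longrightarrow> d n * d (n + 1) = 0\<^sub>m (r (n - 1)) (r (n + 1))"
  unfolding is_complex_def by (metis add_diff_cancel_right' diff_diff_eq one_add_one)

lemma reg_up:
  assumes cx: "is_complex r d" and ex: "exact_complex r d" and rg: "regd r d m"
  shows "regd r d (m + 1)"
proof -
  from rg obtain t where t: "t \<in> carrier_mat (r m) (r (m - 1))" and dtd: "d m * t * d m = d m"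
    unfolding regd_def by blast
  have E: "d (m + 1) \<in> carrier_mat (r m) (r (m + 1))" using cx_carrier[OF cx, of "m + 1"] by simp
  have "\<exists>U \<in> carrier_mat (r (m + 1)) (r m). d (m + 1) * U * d (m + 1) = d (m + 1)"
  proof (rule prop_up_mat[OF cx_carrier[OF cx, of m] E cx_zero[OF cx, of m] _ t dtd])
    fix v :: "'a vec" assume "v \<in> carrier_vec (r m)" "d m *\<^sub>v v = 0\<^sub>v (r (m - 1))"
    thus "\<exists>w \<in> carrier_vec (r (m + 1)). v = d (m + 1) *\<^sub>v w"
      using ex unfolding exact_complex_def by blast
  qed
  thus ?thesis unfolding regd_def by simp
qed

lemma dual_complex:
  assumes cx: "is_complex r d"
  shows "is_complex (dual_ranks r) (dual_diff d)"
  unfolding is_complex_def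
proof (intro conjI allI)
  fix n
  show "dual_diff d n \<in> carrier_mat (dual_ranks r (n - 1)) (dual_ranks r n)"
    using cx_carrier[OF cx, of "- n + 1"] unfolding dual_diff_def dual_ranks_def by simp
  have e1: "- (n - 1) + 1 = (- n + 1) + 1" by simp
  have "dual_diff d (n - 1) * dual_diff d n = transpose_mat (d (- n + 1 + 1)) * transpose_mat (d (- n + 1))"
    unfolding dual_diff_def e1 ..
  also have "\<dots> = transpose_mat (d (- n + 1) * d (- n + 1 + 1))"
    by (rule transpose_mult[symmetric], rule cx_carrier[OF cx], use cx_carrier[OF cx, of "- n + 1 + 1"] in simp)
  also have "\<dots> = 0\<^sub>m (dual_ranks r (n - 2)) (dual_ranks r n)"
    unfolding cx_zero[OF cx] dual_ranks_def by (simp add: algebra_simps)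
  finally show "dual_diff d (n - 1) * dual_diff d n = 0\<^sub>m (dual_ranks r (n - 2)) (dual_ranks r n)" .
qed

lemma reg_down:
  assumes cx: "is_complex r d" and ta: "totally_acyclic r d" and rg: "regd r d m"
  shows "regd r d (m - 1)"
proof -
  from rg obtain t where t: "t \<in> carrier_mat (r m) (r (m - 1))" and dtd: "d m * t * d m = d m"
    unfolding regd_def by blast
  have D: "d m \<in> carrier_mat (r (m - 1)) (r m)" using cx_carrier[OF cx] .
  have "regd (dual_ranks r) (dual_diff d) (1 - m)"
    unfolding regd_def dual_diff_def dual_ranks_def
    using reg_transpose[OF D t dtd] t by (intro bexI[of _ "transpose_mat t"]) auto
  from reg_up[OF dual_complex[OF cx] _ this] ta
  have "regd (dual_ranks r) (dual_diff d) (1 - m + 1)" unfolding totally_acyclic_def by blast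
  then obtain u where u: "u \<in> carrier_mat (r (m - 2)) (r (m - 1))"
    and udu: "transpose_mat (d (m - 1)) * u * transpose_mat (d (m - 1)) = transpose_mat (d (m - 1))"
    unfolding regd_def dual_diff_def dual_ranks_def by (auto simp: algebra_simps)
  have Dt: "transpose_mat (d (m - 1)) \<in> carrier_mat (r (m - 1)) (r (m - 1 - 1))"
    using cx_carrier[OF cx, of "m - 1"] by simp
  have u': "u \<in> carrier_mat (r (m - 1 - 1)) (r (m - 1))" using u by (simp add: algebra_simps)
  show ?thesis using reg_transpose[OF Dt u' udu] u' unfolding regd_def
    by (intro bexI[of _ "transpose_mat u"]) auto
qed

lemma all_reg:
  assumes cx: "is_complex r d" and ta: "totally_acyclic r d" and rg: "regd r d m0"
  shows "regd r d m"
proof (induct m rule: int_induct[of _ m0])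
  case base show ?case using rg .
next
  case (step1 i) thus ?case using reg_up[OF cx] ta unfolding totally_acyclic_def by blast
next
  case (step2 i) thus ?case using reg_down[OF cx ta] by blast
qed

lemma contr_from_reg:
  assumes cx: "is_complex r d" and ex: "exact_complex r d" and rg: "\<And>m. regd r d m"
  shows "contractible r d"
proof -
  have "\<forall>n. \<exists>t. t \<in> carrier_mat (r (n + 1)) (r n) \<and> d (n + 1) * t * d (n + 1) = d (n + 1)"
  proof
    fix n
    show "\<exists>t. t \<in> carrier_mat (r (n + 1)) (r n) \<and> d (n + 1) * t * d (n + 1) = d (n + 1)"
      using rg[of "n + 1"] unfolding regd_def by auto
  qed
  then obtain t where t: "\<And>n. t n \<in> carrier_mat (r (n + 1)) (r n)"
    and dtd: "\<And>n. d (n + 1) * t n * d (n + 1) = d (n + 1)" by metis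
  show ?thesis unfolding contractible_def
  proof (intro exI[of _ t] conjI allI)
    fix n
    show "t n \<in> carrier_mat (r (n + 1)) (r n)" by (rule t)
    define p where "p = d (n + 1) * t n"
    define q where "q = t (n - 1) * d n"
    have Dn: "d n \<in> carrier_mat (r (n - 1)) (r n)" using cx_carrier[OF cx] .
    have Dn1: "d (n + 1) \<in> carrier_mat (r n) (r (n + 1))" using cx_carrier[OF cx, of "n + 1"] by simp
    have tn: "t n \<in> carrier_mat (r (n + 1)) (r n)" by (rule t)
    have tm: "t (n - 1) \<in> carrier_mat (r n) (r (n - 1))" using t[of "n - 1"] by simp
    have dtd2: "d n * t (n - 1) * d n = d n" using dtd[of "n - 1"] by simp
    have p: "p \<in> carrier_mat (r n) (r n)" unfolding p_def using Dn1 tn by simp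
    have q: "q \<in> carrier_mat (r n) (r n)" unfolding q_def using Dn tm by simp
    have pp: "p * p = p"
    proof -
      have dt: "d (n + 1) * t n \<in> carrier_mat (r n) (r n)" using Dn1 tn by simp
      have "p * p = (d (n + 1) * t n * d (n + 1)) * t n" unfolding p_def
        by (rule assoc_mult_mat[OF dt Dn1 tn, symmetric])
      thus ?thesis unfolding dtd p_def .
    qed
    have qq: "q * q = q"
    proof -
      have td: "t (n - 1) * d n \<in> carrier_mat (r n) (r n)" using Dn tm by simp
      have dt: "d n * t (n - 1) \<in> carrier_mat (r (n - 1)) (r (n - 1))" using Dn tm by simp
      have "q * q = (t (n - 1) * d n * t (n - 1)) * d n" unfolding q_def
        by (rule assoc_mult_mat[OF td tm Dn, symmetric])
      also have "t (n - 1) * d n * t (n - 1) = t (n - 1) * (d n * t (n - 1))"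
        by (rule assoc_mult_mat[OF tm Dn tm])
      also have "t (n - 1) * (d n * t (n - 1)) * d n = t (n - 1) * (d n * t (n - 1) * d n)"
        by (rule assoc_mult_mat[OF tm dt Dn])
      finally have "q * q = t (n - 1) * (d n * t (n - 1) * d n)" .
      thus ?thesis unfolding dtd2 q_def .
    qed
    have qp: "q * p = 0\<^sub>m (r n) (r n)"
    proof -
      have dt: "d (n + 1) * t n \<in> carrier_mat (r n) (r n)" using Dn1 tn by simp
      have "q * p = t (n - 1) * (d n * (d (n + 1) * t n))" unfolding q_def p_def
        by (rule assoc_mult_mat[OF tm Dn dt])
      also have "d n * (d (n + 1) * t n) = (d n * d (n + 1)) * t n"
        by (rule assoc_mult_mat[OF Dn Dn1 tn, symmetric])
      finally have "q * p = t (n - 1) * ((d n * d (n + 1)) * t n)" .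
      thus ?thesis unfolding cx_zero[OF cx] using tm tn by simp
    qed
    have dq: "d n * (1\<^sub>m (r n) - q) = 0\<^sub>m (r (n - 1)) (r n)"
    proof -
      have "d n * (1\<^sub>m (r n) - q) = d n * 1\<^sub>m (r n) - d n * q"
        by (rule mult_minus_distrib_mat[OF Dn]) (use q in auto)
      also have "d n * q = d n" unfolding q_def using dtd2 Dn tm
        by (subst assoc_mult_mat[OF Dn tm Dn, symmetric]) simp
      finally show ?thesis using Dn by (intro eq_matI) auto
    qed
    have key: "p * (1\<^sub>m (r n) - q) = 1\<^sub>m (r n) - q"
    proof (rule mat_col_eqI)
      fix j assume "j < dim_col (1\<^sub>m (r n) - q)"
      hence j: "j < r n" using q by simp
      have oq: "1\<^sub>m (r n) - q \<in> carrier_mat (r n) (r n)" using q by (intro minus_carrier_mat) auto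
      have cv: "col (1\<^sub>m (r n) - q) j \<in> carrier_vec (r n)" using oq j by simp
      have "d n *\<^sub>v col (1\<^sub>m (r n) - q) j = col (d n * (1\<^sub>m (r n) - q)) j"
        using col_mult2[OF Dn oq j] by simp
      also have "\<dots> = 0\<^sub>v (r (n - 1))" unfolding dq using j by auto
      finally obtain w where w: "w \<in> carrier_vec (r (n + 1))"
        and cw: "col (1\<^sub>m (r n) - q) j = d (n + 1) *\<^sub>v w"
        using ex cv unfolding exact_complex_def by blast
      have "col (p * (1\<^sub>m (r n) - q)) j = p *\<^sub>v col (1\<^sub>m (r n) - q) j"
        using col_mult2[OF p oq j] by simp
      also have "\<dots> = (p * d (n + 1)) *\<^sub>v w" unfolding cw using p Dn1 w by simp
      also have "p * d (n + 1) = d (n + 1)" unfolding p_def by (rule dtd)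
      finally show "col (p * (1\<^sub>m (r n) - q)) j = col (1\<^sub>m (r n) - q) j" unfolding cw .
    qed (use p q in auto)
    from inv_from_idem[OF p q pp qq qp key]
    show "invertible_mat (d (n + 1) * t n + t (n - 1) * d n)" unfolding p_def q_def .
  qed
qed

theorem mainTheorem3:
  fixes r :: "int \<Rightarrow> nat" and d :: "int \<Rightarrow> 'a::comm_ring_1 mat"
  assumes "noetherian_ring TYPE('a)" and "local_ring TYPE('a)"
    and "is_complex r d" and "totally_acyclic r d"
  shows "(\<exists>n. contractible_at r d n) \<longleftrightarrow> contractible r d"
proof
  assume "\<exists>n. contractible_at r d n"
  then obtain n s1 s0 where s1: "s1 \<in> carrier_mat (r (n + 1)) (r n)"
    and s0: "s0 \<in> carrier_mat (r n) (r (n - 1))"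
    and inv: "invertible_mat (d (n + 1) * s1 + s0 * d n)"
    unfolding contractible_at_def by blast
  have cx: "is_complex r d" by fact
  have Dn1: "d (n + 1) \<in> carrier_mat (r n) (r (n + 1))" using cx_carrier[OF cx, of "n + 1"] by simp
  from start_reg[OF cx_carrier[OF cx, of n] Dn1 cx_zero[OF cx, of n] s1 s0 inv]
  have "regd r d (n + 1)" unfolding regd_def by simp
  hence "\<And>m. regd r d m" using all_reg[OF cx assms(4)] by blast
  thus "contractible r d" using contr_from_reg[OF cx] assms(4) unfolding totally_acyclic_def by blast
next
  assume "contractible r d"
  then obtain s where s: "\<And>n. s n \<in> carrier_mat (r (n + 1)) (r n)"
    and inv: "\<And>n. invertible_mat (d (n + 1) * s n + s (n - 1) * d n)"
    unfolding contractible_def by blast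
  have "contractible_at r d 0" unfolding contractible_at_def
    using s[of 0] s[of "0 - 1"] inv[of 0] by (intro exI[of _ "s 0"] exI[of _ "s (0 - 1)"]) simp
  thus "\<exists>n. contractible_at r d n" by blast
qed

end
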